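(* Let $p(x,y)\in\mathbb{C}[x,y]$ be a nonzero homogeneous polynomial with $p(1,0)\neq0$, and let $\mathcal{Z}$ be the set of distinct complex roots of $p(x,1)$. Suppose there are five distinct $z_1,z_2,z_3,z_4,z_5\in\mathcal{Z}$ such that both $(z_1,z_2,z_3,z_4)$ and $(z_1,z_2,z_3,z_5)$ are critical with respect to $\mathcal{Z}$. Then every element of $\mathrm{Stab}_{\mathrm{GL}_2(\mathbb{C})}(p(x,y))$ is a scalar matrix (i.e. the image of the stabilizer in $\mathrm{PGL}_2(\mathbb{C})$ is trivial).
   Context: $\mathrm{GL}_2(\mathbb{C})$ acts on $\mathbb{C}[x,y]$ by $A\cdot p(x,y)=p(ax+by,cx+dy)$ for $A=\begin{pmatrix}a&b\\c&d\end{pmatrix}$. The cross ratio of distinct $z_1,z_2,z_3,z_4\in\mathbb{C}$ is $[z_1,z_2,z_3,z_4]=\frac{(z_1-z_3)(z_2-z_4)}{(z_1-z_4)(z_2-z_3)}$. Let $V_4=\{\mathrm{id},(12)(34),(13)(24),(14)(23)\}\subset S_4$. For a set $\mathcal{Z}\subset\mathbb{C}$ with at least four elements, a 4-tuple $\zeta=(z_1,z_2,z_3,z_4)$ of distinct elements of $\mathcal{Z}$ is critical (with respect to $\mathcal{Z}$) if for every 4-tuple $(y_1,y_2,y_3,y_4)$ of distinct elements of $\mathcal{Z}$, $[z_1,z_2,z_3,z_4]=[y_1,y_2,y_3,y_4]$ holds if and only if $(y_1,y_2,y_3,y_4)=(z_{\sigma(1)},z_{\sigma(2)},z_{\sigma(3)},z_{\sigma(4)})$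 for some $\sigma\in V_4$. *)

theory Defs
  imports Complex_Main
begin

definition hpoly :: "nat \<Rightarrow> (nat \<Rightarrow> complex) \<Rightarrow> complex \<Rightarrow> complex \<Rightarrow> complex" where
  "hpoly n coef x y = (\<Sum>k=0..n. coef k * x ^ k * y ^ (n - k))"

definition cross_ratio :: "complex \<Rightarrow> complex \<Rightarrow> complex \<Rightarrow> complex \<Rightarrow> complex" where
  "cross_ratio z1 z2 z3 z4 = ((z1 - z3) * (z2 - z4)) / ((z1 - z4) * (z2 - z3))"

definition distinct4 :: "complex \<Rightarrow> complex \<Rightarrow> complex \<Rightarrow> complex \<Rightarrow> bool" where
  "distinct4 z1 z2 z3 z4 = distinct [z1, z2, z3, z4]"

definition V4_orbit :: "complex \<Rightarrow> complex \<Rightarrow> complex \<Rightarrow> complex \<Rightarrow> (complex \<times> complex \<times> complex \<times> complex) set" where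
  "V4_orbit z1 z2 z3 z4 = {(z1, z2, z3, z4), (z2, z1, z4, z3), (z3, z4, z1, z2), (z4, z3, z2, z1)}"

definition critical :: "complex set \<Rightarrow> complex \<Rightarrow> complex \<Rightarrow> complex \<Rightarrow> complex \<Rightarrow> bool" where
  "critical Z z1 z2 z3 z4 \<longleftrightarrow>
     z1 \<in> Z \<and> z2 \<in> Z \<and> z3 \<in> Z \<and> z4 \<in> Z \<and> distinct4 z1 z2 z3 z4 \<and>
     (\<forall>y1\<in>Z. \<forall>y2\<in>Z. \<forall>y3\<in>Z. \<forall>y4\<in>Z. distinct4 y1 y2 y3 y4 \<longrightarrow>
        (cross_ratio z1 z2 z3 z4 = cross_ratio y1 y2 y3 y4 \<longleftrightarrow>
         (y1, y2, y3, y4) \<in> V4_orbit z1 z2 z3 z4))"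

text \<open>Stabilizer in GL_2(C) of p; a matrix ((a,b),(c,d)) is stored as (a,b,c,d).
  Equality of polynomials over C is equality of polynomial functions.\<close>
definition stab_GL2 :: "(complex \<Rightarrow> complex \<Rightarrow> complex) \<Rightarrow> (complex \<times> complex \<times> complex \<times> complex) set" where
  "stab_GL2 p = {(a, b, c, d). a * d - b * c \<noteq> 0 \<and>
      (\<forall>x y. p (a * x + b * y) (c * x + d * y) = p x y)}"

end

theory Submission
  imports Defs
begin

lemma hpoly_scale: "hpoly n coef (t*x) (t*y) = t^n * hpoly n coef x y"
  unfolding hpoly_def sum_distrib_left
proof (rule sum.cong[OF refl])
  fix k assume "k \<in> {0..n}"
  then have "t^n = t^k * t^(n-k)" by (simp add: power_add[symmetric])
  then show "coef k * (t * x) ^ k * (t * y) ^ (n - k) = t ^ n * (coef k * x ^ k * y ^ (n - k))"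
    by (simp add: power_mult_distrib)
qed

lemma hpoly_y0: "hpoly n coef x 0 = coef n * x^n"
proof -
  have "hpoly n coef x 0 = (\<Sum>k\<in>{0..n}. if k = n then coef n * x^n else 0)"
    unfolding hpoly_def by (rule sum.cong) auto
  then show ?thesis by simp
qed

lemma mob_diff:
  fixes a b c d u v :: complex
  assumes "c*u+d \<noteq> 0" "c*v+d \<noteq> 0"
  shows "(a*u+b)/(c*u+d) - (a*v+b)/(c*v+d) = (a*d-b*c)*(u-v)/((c*u+d)*(c*v+d))"
  using assms by (simp add: field_simps)

lemma cr_mob:
  fixes a b c d u1 u2 u3 u4 :: complex
  assumes "c*u1+d \<noteq> 0" "c*u2+d \<noteq> 0" "c*u3+d \<noteq> 0" "c*u4+d \<noteq> 0" "a*d-b*c \<noteq> 0"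
  shows "cross_ratio ((a*u1+b)/(c*u1+d)) ((a*u2+b)/(c*u2+d)) ((a*u3+b)/(c*u3+d)) ((a*u4+b)/(c*u4+d))
       = cross_ratio u1 u2 u3 u4"
  unfolding cross_ratio_def using assms
  by (simp add: mob_diff)

theorem lemma5p1:
  fixes n :: nat and coef :: "nat \<Rightarrow> complex" and z1 z2 z3 z4 z5 :: complex
  assumes nonzero: "\<exists>k\<le>n. coef k \<noteq> 0"
    and lead: "hpoly n coef 1 0 \<noteq> 0"
    and crit1: "critical {z. hpoly n coef z 1 = 0} z1 z2 z3 z4"
    and crit2: "critical {z. hpoly n coef z 1 = 0} z1 z2 z3 z5"
    and dist: "distinct [z1, z2, z3, z4, z5]"
  shows "\<forall>(a, b, c, d) \<in> stab_GL2 (hpoly n coef). b = 0 \<and> c = 0 \<and> a = d"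
proof (clarify)
  fix a b c d assume st: "(a, b, c, d) \<in> stab_GL2 (hpoly n coef)"
  define Z where "Z = {z. hpoly n coef z 1 = 0}"
  have det: "a*d - b*c \<noteq> 0" and inv: "\<And>x y. hpoly n coef (a*x+b*y) (c*x+d*y) = hpoly n coef x y"
    using st unfolding stab_GL2_def by auto
  have cn: "coef n \<noteq> 0" using lead by (simp add: hpoly_y0)
  define f where "f z = (a*z+b)/(c*z+d)" for z
  have den: "c*z+d \<noteq> 0" if "z \<in> Z" for z
  proof
    assume w0: "c*z+d = 0"
    have "a*z+b \<noteq> 0"
    proof
      assume "a*z+b = 0"
      with w0 have "b = -a*z" "d = -c*z" by (simp_all add: eq_neg_iff_add_eq_0 add.commute)
      with det show False by (simp add: algebra_simps)
    qed
    moreover have "hpoly n coef (a*z+b) 0 = 0"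
      using inv[of z 1] w0 that by (simp add: Z_def)
    ultimately show False using cn by (simp add: hpoly_y0)
  qed
  have inZ: "f z \<in> Z" if "z \<in> Z" for z
  proof -
    have w: "c*z+d \<noteq> 0" using den that .
    have "hpoly n coef ((c*z+d) * f z) ((c*z+d) * 1) = 0"
      using inv[of z 1] that w by (simp add: Z_def f_def)
    then have "(c*z+d)^n * hpoly n coef (f z) 1 = 0" by (simp only: hpoly_scale)
    then show ?thesis using w by (simp add: Z_def)
  qed
  have injf: "u = v" if "u \<in> Z" "v \<in> Z" "f u = f v" for u v
  proof -
    have "f u - f v = (a*d-b*c)*(u-v)/((c*u+d)*(c*v+d))"
      unfolding f_def by (rule mob_diff) (use den that in auto)
    with that(3) det den[OF that(1)] den[OF that(2)] show ?thesis by simp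
  qed
  have cr: "cross_ratio (f u1) (f u2) (f u3) (f u4) = cross_ratio u1 u2 u3 u4"
    if "u1 \<in> Z" "u2 \<in> Z" "u3 \<in> Z" "u4 \<in> Z" for u1 u2 u3 u4
    unfolding f_def by (rule cr_mob) (use den that det in auto)
  have dst: "distinct4 (f u1) (f u2) (f u3) (f u4)"
    if "u1 \<in> Z" "u2 \<in> Z" "u3 \<in> Z" "u4 \<in> Z" "distinct4 u1 u2 u3 u4" for u1 u2 u3 u4
    using that injf unfolding distinct4_def by auto
  have Zs: "z1 \<in> Z" "z2 \<in> Z" "z3 \<in> Z" "z4 \<in> Z" "z5 \<in> Z"
    using crit1 crit2 unfolding critical_def Z_def by auto
  have o1: "(f z1, f z2, f z3, f z4) \<in> V4_orbit z1 z2 z3 z4"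
  proof -
    have A: "\<forall>y1\<in>Z. \<forall>y2\<in>Z. \<forall>y3\<in>Z. \<forall>y4\<in>Z. distinct4 y1 y2 y3 y4 \<longrightarrow>
        (cross_ratio z1 z2 z3 z4 = cross_ratio y1 y2 y3 y4 \<longleftrightarrow>
         (y1, y2, y3, y4) \<in> V4_orbit z1 z2 z3 z4)" and D: "distinct4 z1 z2 z3 z4"
      using crit1 unfolding critical_def Z_def by auto
    have "distinct4 (f z1) (f z2) (f z3) (f z4)" using dst Zs D by blast
    moreover have "cross_ratio z1 z2 z3 z4 = cross_ratio (f z1) (f z2) (f z3) (f z4)"
      using cr Zs by simp
    ultimately show ?thesis using A inZ Zs by blast
  qed
  have o2: "(f z1, f z2, f z3, f z5) \<in> V4_orbit z1 z2 z3 z5"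
  proof -
    have A: "\<forall>y1\<in>Z. \<forall>y2\<in>Z. \<forall>y3\<in>Z. \<forall>y4\<in>Z. distinct4 y1 y2 y3 y4 \<longrightarrow>
        (cross_ratio z1 z2 z3 z5 = cross_ratio y1 y2 y3 y4 \<longleftrightarrow>
         (y1, y2, y3, y4) \<in> V4_orbit z1 z2 z3 z5)" and D: "distinct4 z1 z2 z3 z5"
      using crit2 unfolding critical_def Z_def by auto
    have "distinct4 (f z1) (f z2) (f z3) (f z5)" using dst Zs D by blast
    moreover have "cross_ratio z1 z2 z3 z5 = cross_ratio (f z1) (f z2) (f z3) (f z5)"
      using cr Zs by simp
    ultimately show ?thesis using A inZ Zs by blast
  qed
  have fix3: "f z1 = z1" "f z2 = z2" "f z3 = z3"
    using o1 o2 dist unfolding V4_orbit_def by auto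
  have key: "c*z^2 + (d-a)*z - b = 0" if "z \<in> {z1,z2,z3}" for z
  proof -
    have "z \<in> Z" using that Zs by auto
    from den[OF this] have "(a*z+b) = z*(c*z+d)"
      using that fix3 unfolding f_def by (auto simp: field_simps)
    then show ?thesis by (simp add: algebra_simps power2_eq_square)
  qed
  have e1: "c*z1^2 + (d-a)*z1 - b = 0" "c*z2^2 + (d-a)*z2 - b = 0" "c*z3^2 + (d-a)*z3 - b = 0"
    using key by auto
  have "c*(z1+z2) + (d-a) = 0"
  proof -
    have "(z1 - z2) * (c*(z1+z2) + (d-a)) = 0"
      using e1 by (simp add: algebra_simps power2_eq_square)
    then show ?thesis using dist by auto
  qed
  moreover have "c*(z1+z3) + (d-a) = 0"
  proof -
    have "(z1 - z3) * (c*(z1+z3) + (d-a)) = 0"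
      using e1 by (simp add: algebra_simps power2_eq_square)
    then show ?thesis using dist by auto
  qed
  ultimately have "c*(z2 - z3) = 0" by (metis (no_types, lifting) add_diff_cancel_left diff_diff_eq2 diff_self right_diff_distrib add.commute add.left_commute distrib_left)
  then have c0: "c = 0" using dist by auto
  then have "d = a" using \<open>c*(z1+z2) + (d-a) = 0\<close> by simp
  moreover have "b = 0" using e1(1) c0 \<open>d = a\<close> by simp
  ultimately show "b = 0 \<and> c = 0 \<and> a = d" using c0 by simp
qed

end
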